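(* Let $f:\mathbb D\to\mathbb C^3$ be holomorphic with $f(\mathbb D)\subset\partial\mathbb E$. If $f(\mathbb D)\cap\mathcal T\neq\varnothing$, then $f(\mathbb D)\subset\mathcal T$.
   Context: $\mathbb D$ is the open unit disc. The tetrablock is $\mathbb E=\{(z_1,z_2,z_3)\in\mathbb C^3:\ |z_2-\bar z_1z_3|+|z_1z_2-z_3|+|z_1|^2<1\}$, and $\mathcal T=\{z\in\mathbb C^3: z_1z_2=z_3\}$. *)

theory Defs
  imports "HOL-Complex_Analysis.Complex_Analysis"
begin

definition tetrablock :: "(complex \<times> complex \<times> complex) set" where
  "tetrablock = {(z1, z2, z3). cmod (z2 - cnj z1 * z3) + cmod (z1 * z2 - z3) + (cmod z1)^2 < 1}"

definition royal_T :: "(complex \<times> complex \<times> complex) set" where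
  "royal_T = {(z1, z2, z3). z1 * z2 = z3}"

end

theory Submission
  imports Defs
begin

definition gS :: "complex \<times> complex \<times> complex \<Rightarrow> real" where
  "gS p = cmod (fst (snd p) - cnj (fst p) * snd (snd p)) + cmod (fst p * fst (snd p) - snd (snd p)) + (cmod (fst p))^2"

lemma tb_eq: "tetrablock = {p. gS p < 1}"
  unfolding tetrablock_def gS_def by auto

lemma cont_gS: "continuous_on UNIV gS"
  unfolding gS_def by (intro continuous_intros)

lemma open_tb: "open tetrablock"
  unfolding tb_eq by (rule open_Collect_less[OF cont_gS]) (intro continuous_intros)

lemma key:
  fixes z1 z2 z3 :: complex
  shows "cmod z2 * (1 - (cmod z1)^2) \<le> cmod (z2 - cnj z1 * z3) + cmod z1 * cmod (z1*z2 - z3)"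
proof -
  have h: "z1 * cnj z1 = of_real ((cmod z1)^2)" by (rule complex_norm_square[symmetric])
  have e: "z2 * (1 - of_real ((cmod z1)^2)) = (z2 - cnj z1 * z3) - cnj z1 * (z1*z2 - z3)"
    unfolding h[symmetric] by (simp add: algebra_simps)
  have "cmod z2 * (1 - (cmod z1)^2) \<le> cmod z2 * \<bar>1 - (cmod z1)^2\<bar>"
    by (simp add: mult_left_mono)
  also have "\<dots> = cmod (z2 * (1 - of_real ((cmod z1)^2)))"
  proof -
    have "(1::complex) - of_real ((cmod z1)^2) = of_real (1 - (cmod z1)^2)" by simp
    then show ?thesis by (simp only: norm_mult norm_of_real)
  qed
  also have "\<dots> \<le> cmod (z2 - cnj z1 * z3) + cmod (cnj z1 * (z1*z2 - z3))"
    unfolding e by (rule norm_triangle_ineq4)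
  also have "\<dots> = cmod (z2 - cnj z1 * z3) + cmod z1 * cmod (z1*z2 - z3)"
    by (simp add: norm_mult)
  finally show ?thesis .
qed

lemma tb_z2:
  assumes "(z1, z2, z3) \<in> tetrablock" shows "cmod z2 < 1"
proof -
  from assms have S: "cmod (z2 - cnj z1 * z3) + cmod (z1*z2 - z3) + (cmod z1)^2 < 1"
    by (simp add: tetrablock_def)
  have z1: "cmod z1 < 1"
  proof (rule ccontr)
    assume "\<not> cmod z1 < 1"
    then have "1 \<le> (cmod z1)^2" by (simp add: one_le_power)
    with S show False by (smt (verit) norm_ge_zero)
  qed
  have "cmod z1 * cmod (z1*z2 - z3) \<le> cmod (z1*z2 - z3)"
    using z1 by (simp add: mult_left_le_one_le)
  with key[of z2 z1 z3] S have "cmod z2 * (1 - (cmod z1)^2) < 1 * (1 - (cmod z1)^2)" by simp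
  moreover have "0 < 1 - (cmod z1)^2" using z1
    by (simp add: abs_square_less_1)
  ultimately show ?thesis by (meson mult_less_cancel_right_pos)
qed

lemma closure_tb:
  "closure tetrablock \<subseteq> {p. gS p \<le> 1} \<inter> {p. cmod (fst (snd p)) \<le> 1}"
proof (rule closure_minimal)
  show "tetrablock \<subseteq> {p. gS p \<le> 1} \<inter> {p. cmod (fst (snd p)) \<le> 1}"
    using tb_z2 by (force simp: tb_eq)
  show "closed ({p. gS p \<le> 1} \<inter> {p. cmod (fst (snd p)) \<le> 1})"
    by (intro closed_Int closed_Collect_le cont_gS continuous_intros)
qed

lemma frontier_props:
  assumes "(z1, z2, z3) \<in> frontier tetrablock"
  shows "cmod (z2 - cnj z1 * z3) + cmod (z1*z2 - z3) + (cmod z1)^2 \<le> 1"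
    and "cmod z2 \<le> 1" and "(z1, z2, z3) \<notin> tetrablock"
proof -
  have "(z1, z2, z3) \<in> closure tetrablock" using assms by (simp add: frontier_def)
  with closure_tb show "cmod (z2 - cnj z1 * z3) + cmod (z1*z2 - z3) + (cmod z1)^2 \<le> 1"
    and "cmod z2 \<le> 1" by (auto simp: gS_def)
  show "(z1, z2, z3) \<notin> tetrablock"
    using assms open_tb by (simp add: frontier_def interior_open)
qed

lemma T_of_z1:
  assumes "cmod (z2 - cnj z1 * z3) + cmod (z1*z2 - z3) + (cmod z1)^2 \<le> 1" and "cmod z1 = 1"
  shows "z1 * z2 = z3"
  using assms by (smt (verit) norm_ge_zero power_one right_minus_eq norm_eq_zero)

lemma T_of_z2:
  assumes S: "cmod (z2 - cnj z1 * z3) + cmod (z1*z2 - z3) + (cmod z1)^2 \<le> 1" and z2: "cmod z2 = 1"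
  shows "z1 * z2 = z3"
proof (cases "cmod z1 = 1")
  case True then show ?thesis using T_of_z1 S by blast
next
  case False
  have "(cmod z1)^2 \<le> 1" using S by (smt (verit) norm_ge_zero)
  then have z1: "cmod z1 \<le> 1" by (simp add: abs_square_le_1)
  with False have z1': "cmod z1 < 1" by simp
  have k: "1 - (cmod z1)^2 \<le> cmod (z2 - cnj z1 * z3) + cmod z1 * cmod (z1*z2 - z3)"
    using key[of z2 z1 z3] z2 by simp
  have eq: "cmod (z1*z2 - z3) * (1 - cmod z1) = cmod (z1*z2 - z3) - cmod z1 * cmod (z1*z2 - z3)"
    by (simp add: algebra_simps)
  have "cmod (z1*z2 - z3) * (1 - cmod z1) \<le> 0"
    unfolding eq using k S by linarith
  moreover have "0 < 1 - cmod z1" using z1' by simp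
  ultimately have "cmod (z1*z2 - z3) \<le> 0"
    by (simp add: mult_le_0_iff)
  then show ?thesis by simp
qed

lemma T_in_tb:
  assumes "cmod a < 1" "cmod b < 1"
  shows "(a, b, a*b) \<in> tetrablock"
proof -
  have h: "a * cnj a = of_real ((cmod a)^2)" by (rule complex_norm_square[symmetric])
  have e: "b - cnj a * (a*b) = b * (1 - of_real ((cmod a)^2))"
    unfolding h[symmetric] by (simp add: algebra_simps)
  have p: "0 \<le> 1 - (cmod a)^2" using assms(1)
    by (simp add: abs_square_le_1)
  have "cmod (b - cnj a * (a*b)) = cmod b * (1 - (cmod a)^2)"
  proof -
    have "(1::complex) - of_real ((cmod a)^2) = of_real (1 - (cmod a)^2)" by simp
    then show ?thesis unfolding e using p by (simp only: norm_mult norm_of_real abs_of_nonneg)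
  qed
  moreover have "cmod b * (1 - (cmod a)^2) + (cmod a)^2 < 1"
  proof -
    have "(cmod a)^2 < 1" using assms(1) by (simp add: power_less_one_iff)
    then have "cmod b * (1 - (cmod a)^2) < 1 * (1 - (cmod a)^2)"
      using assms(2) by (intro mult_strict_right_mono) auto
    then show ?thesis by simp
  qed
  ultimately show ?thesis by (simp add: tetrablock_def)
qed

lemma const_of_max:
  fixes g :: "complex \<Rightarrow> complex"
  assumes "g holomorphic_on ball 0 1" "\<forall>z\<in>ball 0 1. cmod (g z) \<le> 1"
    "z0 \<in> ball 0 1" "cmod (g z0) = 1"
  shows "\<forall>z\<in>ball 0 1. cmod (g z) = 1"
proof -
  have "g constant_on ball 0 1"
    by (rule maximum_modulus_principle[OF assms(1) open_ball connected_ball open_ball order_refl assms(3)])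
       (use assms in auto)
  then obtain c where "\<forall>z\<in>ball 0 1. g z = c" by (auto simp: constant_on_def)
  then show ?thesis using assms(3,4) by auto
qed

theorem lemma4:
  fixes f1 f2 f3 :: "complex \<Rightarrow> complex"
  assumes "f1 holomorphic_on ball 0 1"
    and "f2 holomorphic_on ball 0 1"
    and "f3 holomorphic_on ball 0 1"
    and "\<forall>z\<in>ball 0 1. (f1 z, f2 z, f3 z) \<in> frontier tetrablock"
    and "\<exists>z\<in>ball 0 1. (f1 z, f2 z, f3 z) \<in> royal_T"
  shows "\<forall>z\<in>ball 0 1. (f1 z, f2 z, f3 z) \<in> royal_T"
proof -
  obtain z0 where z0: "z0 \<in> ball 0 1" "f1 z0 * f2 z0 = f3 z0"
    using assms(5) by (auto simp: royal_T_def)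
  have S: "\<forall>z\<in>ball 0 1. cmod (f2 z - cnj (f1 z) * f3 z) + cmod (f1 z * f2 z - f3 z) + (cmod (f1 z))^2 \<le> 1"
    using assms(4) frontier_props(1) by blast
  have b1: "\<forall>z\<in>ball 0 1. cmod (f1 z) \<le> 1"
  proof
    fix z :: complex assume "z \<in> ball 0 1"
    with S have "(cmod (f1 z))^2 \<le> 1" by (smt (verit) norm_ge_zero)
    then show "cmod (f1 z) \<le> 1" by (simp add: abs_square_le_1)
  qed
  have b2: "\<forall>z\<in>ball 0 1. cmod (f2 z) \<le> 1"
    using assms(4) frontier_props(2) by blast
  have "cmod (f1 z0) = 1 \<or> cmod (f2 z0) = 1"
  proof (rule ccontr)
    assume "\<not> ?thesis"
    then have "cmod (f1 z0) < 1" "cmod (f2 z0) < 1" using b1 b2 z0(1) by force+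
    then have "(f1 z0, f2 z0, f3 z0) \<in> tetrablock" using T_in_tb z0(2) by metis
    moreover have "(f1 z0, f2 z0, f3 z0) \<notin> tetrablock"
      using assms(4) z0(1) frontier_props(3) by blast
    ultimately show False by simp
  qed
  then show ?thesis
  proof
    assume "cmod (f1 z0) = 1"
    then have "\<forall>z\<in>ball 0 1. cmod (f1 z) = 1" using const_of_max assms(1) b1 z0(1) by blast
    then show ?thesis using S T_of_z1 by (auto simp: royal_T_def)
  next
    assume "cmod (f2 z0) = 1"
    then have "\<forall>z\<in>ball 0 1. cmod (f2 z) = 1" using const_of_max assms(2) b2 z0(1) by blast
    then show ?thesis using S T_of_z2 by (auto simp: royal_T_def)
  qed
qed

end
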